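(* For every infinite set $\Lambda\subseteq\mathbb{N}$ there exists an increasing sequence $(N_t)_{t\ge0}$ of elements of $\Lambda$ such that for all $n\ge0$, $c\in\{0,1\}$ and $k\in\mathbb{Z}$: (1) the limit $\mu_n(c,k)=\lim_{t\to\infty}\dfrac{C_n\big(c,k,(2/3)^nN_t\big)}{(2/3)^nN_t}$ exists; (2) $\mu_n(c,k+2^n)=\mu_n(c,k)$; (3) letting $q_n$ be an integer with $3q_n\equiv1\pmod{2^{n+1}}$, \[ \tfrac32\,\mu_n(c,k)=\mu_{n+1}(c,2q_nk)+\mu_{n+1}(\bar c,2q_nk-q_n)+\mu_{n+1}(c,2q_nk-2q_n), \] where $\bar c=1-c$; (4) $\mu_n(0,k)+\mu_n(1,k)=2^{-n}$.
   Context: The Thue--Morse word in base $3/2$ is the unique binary sequence $\mathbf{t}_{3/2}=(t_i)_{i\ge0}$ with $t_0=0$, $t_{3n}=t_{3n+1}=t_{2n}$ and $t_{3n+2}=1-t_{2n+1}$ for all $n\ge0$ (equivalently, $t_i$ is the digit sum modulo $2$ of the base-$3/2$ expansion of $i$). For $n\ge0$, $c\in\{0,1\}$, $k\in\mathbb{Z}$ and a real number $\alpha\ge0$, $C_n(c,k,\alpha)=\#\{i\in\mathbb{Z}: 0\le i<\alpha,\ t_i=c,\ i\equiv k\pmod{2^n}\}$. *)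

theory Defs
  imports "HOL-Analysis.Analysis" "HOL-Number_Theory.Cong"
begin

function tm32 :: "nat \<Rightarrow> nat" where
  "tm32 i = (if i = 0 then 0
             else if i mod 3 = 2 then 1 - tm32 (2 * (i div 3) + 1)
             else tm32 (2 * (i div 3)))"
  by auto
termination
  by (relation "Wellfounded.measure id") (auto, presburger+)

declare tm32.simps [simp del]

lemma tm32_0: "tm32 0 = 0" by (subst tm32.simps) simp

definition Ccount :: "nat \<Rightarrow> nat \<Rightarrow> int \<Rightarrow> real \<Rightarrow> nat" where
  "Ccount n c k \<alpha> = card {i::nat. real i < \<alpha> \<and> tm32 i = c \<and> [int i = k] (mod 2 ^ n)}"

end

theory Submission imports Defs "HOL-Library.Diagonal_Subsequence" "HOL-Library.Countable"
begin

fun cnt :: "(nat \<Rightarrow> bool) \<Rightarrow> nat \<Rightarrow> nat" where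
  "cnt P 0 = 0" | "cnt P (Suc L) = cnt P L + (if P L then 1 else 0)"

lemma card_cnt: "card {i. i < L \<and> P i} = cnt P L"
proof (induction L)
  case 0 then show ?case by simp
next
  case (Suc L)
  have "{i. i < Suc L \<and> P i} = (if P L then insert L {i. i < L \<and> P i} else {i. i < L \<and> P i})"
    by (auto simp: less_Suc_eq)
  then show ?case using Suc by auto
qed

lemma real_lt_iff_ceil: "real i < a \<longleftrightarrow> i < nat \<lceil>a\<rceil>"
proof -
  have "i < nat \<lceil>a\<rceil> \<longleftrightarrow> int i < \<lceil>a\<rceil>" by linarith
  also have "\<dots> \<longleftrightarrow> real i < a" by (simp add: less_ceiling_iff)
  finally show ?thesis by simp
qed

lemma Ccount_cnt: "Ccount n c k a = cnt (\<lambda>i. tm32 i = c \<and> [int i = k] (mod 2^n)) (nat \<lceil>a\<rceil>)"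
  unfolding Ccount_def real_lt_iff_ceil card_cnt[symmetric] by simp

lemma cnt_mono_add: "cnt P L \<le> cnt P (L + d) \<and> cnt P (L + d) \<le> cnt P L + d"
  by (induction d) auto

lemma cnt_le: "cnt P L \<le> L"
  using cnt_mono_add[of P 0 L] by simp

lemma cnt_lip: "\<bar>real (cnt P a) - real (cnt P b)\<bar> \<le> \<bar>real a - real b\<bar>"
proof (cases "a \<le> b")
  case True
  then obtain d where "b = a + d" using le_add_diff_inverse by (metis le_add_diff_inverse)
  then show ?thesis using cnt_mono_add[of P a d] by auto
next
  case False
  then obtain d where "a = b + d" by (metis le_add_diff_inverse nat_le_linear)
  then show ?thesis using cnt_mono_add[of P b d] by auto
qed

lemma cnt_add: "(\<And>i. (if R i then 1 else 0) = (if P i then 1 else 0) + (if Q i then (1::nat) else 0))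
  \<Longrightarrow> cnt R L = cnt P L + cnt Q L"
  by (induction L) auto

lemma tm32_le1: "tm32 i \<le> 1"
  by (induction i rule: tm32.induct) (subst tm32.simps, auto)

lemma tm32_3a: "tm32 (3*m) = tm32 (2*m)"
proof (cases "m = 0")
  case True then show ?thesis by simp
next
  case False
  have "(3*m) div 3 = m" "(3*m) mod 3 = 0" "3*m \<noteq> 0" using False by auto
  then show ?thesis by (subst tm32.simps[of "3*m"]) simp
qed

lemma tm32_3b: "tm32 (3*m+1) = tm32 (2*m)"
proof -
  have "(3*m+1) div 3 = m" "(3*m+1) mod 3 = 1" "3*m+1 \<noteq> 0" by auto
  then show ?thesis by (subst tm32.simps[of "3*m+1"]) simp
qed

lemma tm32_3c: "tm32 (3*m+2) = 1 - tm32 (2*m+1)"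
proof -
  have "(3*m+2) div 3 = m" "(3*m+2) mod 3 = 2" "3*m+2 \<noteq> 0" by presburger+
  then show ?thesis by (subst tm32.simps[of "3*m+2"]) simp
qed

lemma cnt_res: assumes "M > 0" "r < M"
  shows "cnt (\<lambda>i. i mod M = r) L = (L + (M - 1 - r)) div M"
proof (induction L)
  case 0 then show ?case using assms by simp
next
  case (Suc L)
  have "Suc L + (M - 1 - r) = Suc (L + (M - 1 - r))" by simp
  moreover have "(Suc (L + (M - 1 - r)) mod M = 0) = (L mod M = r)"
  proof -
    have e1: "Suc (L + (M - 1 - r)) = L + (M - r)" using assms by simp
    have e2: "(L + (M - r)) mod M = (L mod M + (M - r)) mod M" by (simp add: mod_add_left_eq)
    have e3: "((L mod M + (M - r)) mod M = 0) = (L mod M = r)"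
    proof -
      have b: "L mod M < M" using assms by simp
      consider "L mod M = r" | "L mod M < r" | "L mod M > r" by linarith
      then show ?thesis
      proof cases
        case 1 then show ?thesis using assms by simp
      next
        case 2
        then have "L mod M + (M - r) < M" "0 < L mod M + (M - r)" using assms by auto
        then show ?thesis using 2 assms by simp
      next
        case 3
        then have "L mod M + (M - r) = M + (L mod M - r)" using assms by auto
        moreover have "L mod M - r < M" "0 < L mod M - r" using 3 b by auto
        ultimately have "(L mod M + (M - r)) mod M = L mod M - r"
          by (metis mod_add_self1 mod_less)
        then show ?thesis using 3 by simp
      qed
    qed
    show ?thesis by (simp only: e1 e2 e3)
  qed
  ultimately show ?case using Suc by (simp add: div_Suc)
qed


lemma cong3:
  fixes x k q M :: int
  assumes h: "[3*q = 1] (mod 2*M)"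
  shows "[3*x = k] (mod M) \<longleftrightarrow> [2*x = 2*q*k] (mod 2*M)"
proof -
  from h obtain a where a: "3*q - 1 = 2*M*a" unfolding cong_iff_dvd_diff dvd_def by blast
  show ?thesis
  proof
    assume "[3*x = k] (mod M)"
    then obtain b where b: "3*x - k = M*b" unfolding cong_iff_dvd_diff dvd_def by blast
    have "2*x - 2*q*k = 2*M*(q*b - 2*a*x)"
    proof -
      have "2*x - 2*q*k = 2*(q*(3*x - k) - (3*q - 1)*x)" by (simp add: algebra_simps)
      also have "\<dots> = 2*(q*(M*b) - (2*M*a)*x)" using a b by simp
      finally show ?thesis by (simp add: algebra_simps)
    qed
    then show "[2*x = 2*q*k] (mod 2*M)" unfolding cong_iff_dvd_diff dvd_def by blast
  next
    assume "[2*x = 2*q*k] (mod 2*M)"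
    then obtain b where b: "2*x - 2*q*k = 2*M*b" unfolding cong_iff_dvd_diff dvd_def by blast
    then have b': "x - q*k = M*b" by simp
    have "3*x - k = 3*(x - q*k) + (3*q - 1)*k" by (simp add: algebra_simps)
    also have "\<dots> = M*(3*b + 2*a*k)" using a b' by (simp add: algebra_simps)
    finally show "[3*x = k] (mod M)" unfolding cong_iff_dvd_diff dvd_def by blast
  qed
qed

lemma q_odd:
  fixes q M :: int
  assumes h: "[3*q = 1] (mod 2*M)" shows "odd q"
proof -
  from h have "[3*q = 1] (mod 2)" by (rule cong_dvd_modulus) simp
  then have "odd (3*q)" unfolding cong_iff_dvd_diff by presburger
  then show ?thesis by simp
qed

lemma par1:
  fixes x k M :: int shows "\<not> [2*x+1 = 2*k] (mod 2*M)"
proof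
  assume "[2*x+1 = 2*k] (mod 2*M)"
  then have "[2*x+1 = 2*k] (mod 2)" by (rule cong_dvd_modulus) simp
  then show False unfolding cong_iff_dvd_diff by presburger
qed

lemma par1': fixes x k M :: int shows "\<not> [1 + 2*x = 2*k] (mod 2*M)"
  using par1[of x k M] by (metis add.commute)

lemma par2:
  fixes x k q M :: int assumes "odd q" shows "\<not> [2*x = 2*k - q] (mod 2*M)"
proof
  assume "[2*x = 2*k - q] (mod 2*M)"
  then have "[2*x = 2*k - q] (mod 2)" by (rule cong_dvd_modulus) simp
  then show False using assms unfolding cong_iff_dvd_diff by presburger
qed

definition Pc :: "nat \<Rightarrow> nat \<Rightarrow> int \<Rightarrow> nat \<Rightarrow> bool" where
  "Pc n c k = (\<lambda>i. tm32 i = c \<and> [int i = k] (mod 2^n))"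

lemma main_ident:
  assumes c: "c \<le> 1" and h: "[3 * q = 1] (mod 2^(n+1))"
  shows "cnt (Pc n c k) (3*M) = cnt (Pc (n+1) c (2*q*k)) (2*M) + cnt (Pc (n+1) (1-c) (2*q*k-q)) (2*M)
     + cnt (Pc (n+1) c (2*q*k-2*q)) (2*M)"
proof (induction M)
  case 0 then show ?case by simp
next
  case (Suc m)
  have h': "[3 * q = 1] (mod 2*2^n)" using h by simp
  have qo: "odd q" using q_odd[OF h'] .
  have pw: "(2::int)^(n+1) = 2*2^n" by simp
  have a1: "Pc n c k (3*m) = Pc (n+1) c (2*q*k) (2*m)"
    unfolding Pc_def using cong3[OF h', of "int m" k] by (simp add: tm32_3a pw)
  have a2: "\<not> Pc (n+1) c (2*q*k) (2*m+1)"
    unfolding Pc_def using par1'[of "int m" "q*k" "2^n"] by (simp add: pw mult.assoc)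
  have b1: "Pc n c k (3*m+1) = Pc (n+1) c (2*q*k-2*q) (2*m)"
  proof -
    have "[int (3*m+1) = k] (mod 2^n) = [3*int m = k - 1] (mod 2^n)"
      by (simp add: cong_iff_dvd_diff algebra_simps)
    also have "\<dots> = [2*int m = 2*q*(k-1)] (mod 2*2^n)" using cong3[OF h'] by simp
    also have "\<dots> = [int (2*m) = 2*q*k-2*q] (mod 2^(n+1))" by (simp add: algebra_simps)
    finally show ?thesis unfolding Pc_def using tm32_3b[of m] by simp
  qed
  have b2: "\<not> Pc (n+1) c (2*q*k-2*q) (2*m+1)"
    unfolding Pc_def using par1[of "int m" "q*k-q" "2^n"] by (simp add: pw algebra_simps)
  have c1: "Pc n c k (3*m+2) = Pc (n+1) (1-c) (2*q*k-q) (2*m+1)"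
  proof -
    have "[int (3*m+2) = k] (mod 2^n) = [3*int m = k - 2] (mod 2^n)"
      by (simp add: cong_iff_dvd_diff algebra_simps)
    also have "\<dots> = [2*int m = 2*q*(k-2)] (mod 2*2^n)" using cong3[OF h'] by simp
    also have "\<dots> = [2*int m + 1 = 2*q*k-q] (mod 2*2^n)"
    proof -
      have d: "(2*int m + 1) - (2*q*k-q) = (2*int m - 2*q*(k-2)) + (1 - 3*q)" by (simp add: algebra_simps)
      have d2: "2*2^n dvd (1 - 3*q)" using h' unfolding cong_iff_dvd_diff by (simp add: dvd_diff_commute)
      show ?thesis unfolding cong_iff_dvd_diff d using dvd_add_left_iff[OF d2] by simp
    qed
    also have "\<dots> = [int (2*m+1) = 2*q*k-q] (mod 2^(n+1))" by (simp add: algebra_simps)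
    finally have cg: "[int (3*m+2) = k] (mod 2^n) = [int (2*m+1) = 2*q*k-q] (mod 2^(n+1))" .
    have "(tm32 (3*m+2) = c) = (tm32 (2*m+1) = 1 - c)"
    proof -
      have "tm32 (3*m+2) = 1 - tm32 (2*m+1)" by (rule tm32_3c)
      then show ?thesis using tm32_le1[of "2*m+1"] c by arith
    qed
    then show ?thesis unfolding Pc_def using cg by simp
  qed
  have c2: "\<not> Pc (n+1) (1-c) (2*q*k-q) (2*m)"
    unfolding Pc_def using par2[OF qo, of "int m" "q*k" "2^n"] by (simp add: pw algebra_simps)
  have s3: "cnt P (3 * Suc m) = cnt P (3*m) + (if P (3*m) then 1 else 0) + (if P (3*m+1) then 1 else 0)
     + (if P (3*m+2) then 1 else 0)" for P
  proof -
    have "3 * Suc m = Suc (Suc (Suc (3*m)))" by simp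
    then show ?thesis by (simp only: cnt.simps) simp
  qed
  have s2: "cnt P (2 * Suc m) = cnt P (2*m) + (if P (2*m) then 1 else 0) + (if P (2*m+1) then 1 else 0)" for P
  proof -
    have "2 * Suc m = Suc (Suc (2*m))" by simp
    then show ?thesis by (simp only: cnt.simps) simp
  qed
  show ?case unfolding s3 s2 Suc.IH unfolding a1 b1 c1 using a2 b2 c2 by simp
qed


lemma Ccount_Pc: "Ccount n c k a = cnt (Pc n c k) (nat \<lceil>a\<rceil>)"
  by (simp add: Ccount_cnt Pc_def)

lemma ceil_bounds: assumes "a \<ge> 0" shows "a \<le> real (nat \<lceil>a\<rceil>)" "real (nat \<lceil>a\<rceil>) \<le> a + 1"
proof -
  have "a \<le> real_of_int \<lceil>a\<rceil>" "real_of_int \<lceil>a\<rceil> \<le> a + 1" by (simp_all add: le_of_int_ceiling of_int_ceiling_le_add_one)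
  moreover have "real (nat \<lceil>a\<rceil>) = real_of_int \<lceil>a\<rceil>" using assms by simp
  ultimately show "a \<le> real (nat \<lceil>a\<rceil>)" "real (nat \<lceil>a\<rceil>) \<le> a + 1" by simp_all
qed

lemma cnt_lip2: "real (cnt P a) - real (cnt P b) \<le> \<bar>real a - real b\<bar>"
  "real (cnt P b) - real (cnt P a) \<le> \<bar>real a - real b\<bar>"
  using cnt_lip[of P a b] by linarith+

lemma cnt_lip3: assumes "\<bar>real a - real b\<bar> \<le> K"
  shows "real (cnt P a) - real (cnt P b) \<le> K" "real (cnt P b) - real (cnt P a) \<le> K"
proof -
  have "real (cnt P a) - real (cnt P b) \<le> \<bar>real a - real b\<bar>"
      "real (cnt P b) - real (cnt P a) \<le> \<bar>real a - real b\<bar>" by (rule cnt_lip2)+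
  then show "real (cnt P a) - real (cnt P b) \<le> K" "real (cnt P b) - real (cnt P a) \<le> K"
    using assms by linarith+
qed

lemma err_rec:
  assumes a: "a \<ge> 0" and c: "c \<le> 1" and h: "[3 * q = 1] (mod 2^(n+1))"
  shows "\<bar>real (Ccount n c k a) - (real (Ccount (n+1) c (2*q*k) (2*a/3))
     + real (Ccount (n+1) (1-c) (2*q*k-q) (2*a/3)) + real (Ccount (n+1) c (2*q*k-2*q) (2*a/3)))\<bar> \<le> 11"
proof -
  define L where "L = nat \<lceil>a\<rceil>"
  define M where "M = L div 3"
  define L' where "L' = nat \<lceil>2*a/3\<rceil>"
  have l1: "a \<le> real L" "real L \<le> a + 1" using ceil_bounds[OF a] unfolding L_def by auto
  have l2: "2*a/3 \<le> real L'" "real L' \<le> 2*a/3 + 1" using ceil_bounds[of "2*a/3"] a unfolding L'_def by auto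
  have m1: "3*M \<le> L" "L \<le> 3*M + 2" unfolding M_def by linarith+
  then have m2: "3*real M \<le> real L" "real L \<le> 3 * real M + 2" by linarith+
  have d1: "\<bar>real L - real (3*M)\<bar> \<le> 2" using m2 by simp
  have d2: "\<bar>real L' - real (2*M)\<bar> \<le> 3" using m2 l1 l2 by simp
  let ?P = "Pc n c k" and ?Q1 = "Pc (n+1) c (2*q*k)" and ?Q2 = "Pc (n+1) (1-c) (2*q*k-q)"
    and ?Q3 = "Pc (n+1) c (2*q*k-2*q)"
  have mi: "real (cnt ?P (3*M)) = real (cnt ?Q1 (2*M)) + real (cnt ?Q2 (2*M)) + real (cnt ?Q3 (2*M))"
    using main_ident[OF c h, of k M] by simp
  have e0: "real (cnt ?P L) - real (cnt ?P (3*M)) \<le> 2" "real (cnt ?P (3*M)) - real (cnt ?P L) \<le> 2"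
  proof -
    have "real (cnt ?P L) - real (cnt ?P (3*M)) \<le> \<bar>real L - real (3*M)\<bar>"
      "real (cnt ?P (3*M)) - real (cnt ?P L) \<le> \<bar>real L - real (3*M)\<bar>" by (rule cnt_lip2)+
    then show "real (cnt ?P L) - real (cnt ?P (3*M)) \<le> 2" "real (cnt ?P (3*M)) - real (cnt ?P L) \<le> 2"
      using d1 by linarith+
  qed
  have e1: "real (cnt ?Q1 L') - real (cnt ?Q1 (2*M)) \<le> 3" "real (cnt ?Q1 (2*M)) - real (cnt ?Q1 L') \<le> 3"
    using cnt_lip3[OF d2] by blast+
  have e2: "real (cnt ?Q2 L') - real (cnt ?Q2 (2*M)) \<le> 3" "real (cnt ?Q2 (2*M)) - real (cnt ?Q2 L') \<le> 3"
    using cnt_lip3[OF d2] by blast+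
  have e3: "real (cnt ?Q3 L') - real (cnt ?Q3 (2*M)) \<le> 3" "real (cnt ?Q3 (2*M)) - real (cnt ?Q3 L') \<le> 3"
    using cnt_lip3[OF d2] by blast+
  show ?thesis unfolding Ccount_Pc L_def[symmetric] L'_def[symmetric]
    using mi e0 e1 e2 e3 by linarith
qed

lemma cong_mod_iff: "[int i = k] (mod 2^n) \<longleftrightarrow> i mod 2^n = nat (k mod 2^n)"
proof -
  have "[int i = k] (mod 2^n) \<longleftrightarrow> int (i mod 2^n) = k mod 2^n"
    unfolding cong_def by (simp add: of_nat_mod)
  also have "\<dots> \<longleftrightarrow> i mod 2^n = nat (k mod 2^n)" by auto
  finally show ?thesis .
qed

lemma sum01:
  assumes a: "a \<ge> 0"
  shows "\<bar>real (Ccount n 0 k a) + real (Ccount n 1 k a) - a / 2^n\<bar> \<le> 2"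
proof -
  define L where "L = nat \<lceil>a\<rceil>"
  define M :: nat where "M = 2^n"
  define r where "r = nat (k mod 2^n)"
  have M0: "M > 0" unfolding M_def by simp
  have rM: "r < M" unfolding r_def M_def
    by (metis nat_less_iff of_nat_numeral of_nat_power pos_mod_bound pos_mod_sign zero_less_numeral zero_less_power)
  have l1: "a \<le> real L" "real L \<le> a + 1" using ceil_bounds[OF a] unfolding L_def by auto
  have "Ccount n 0 k a + Ccount n 1 k a = cnt (\<lambda>i. i mod M = r) L"
    unfolding Ccount_cnt L_def[symmetric]
  proof (rule cnt_add[symmetric])
    fix i
    show "(if i mod M = r then 1 else 0) = (if tm32 i = 0 \<and> [int i = k] (mod 2 ^ n) then 1 else 0) +
          (if tm32 i = 1 \<and> [int i = k] (mod 2 ^ n) then 1 else (0::nat))"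
      using tm32_le1[of i] unfolding cong_mod_iff M_def r_def by auto
  qed
  also have "\<dots> = (L + (M - 1 - r)) div M" using cnt_res[OF M0 rM] .
  finally have eq: "Ccount n 0 k a + Ccount n 1 k a = (L + (M - 1 - r)) div M" .
  define D where "D = (L + (M - 1 - r)) div M"
  have "L + (M - 1 - r) = M * D + (L + (M - 1 - r)) mod M" unfolding D_def by simp
  moreover have "(L + (M - 1 - r)) mod M < M" using M0 by simp
  ultimately have b1: "M * D \<le> L + M" "L < M * D + M" using rM by linarith+
  then have b1': "real M * real D \<le> real L + real M" "real L < real M * real D + real M"
    by (metis of_nat_add of_nat_le_iff of_nat_mult, metis of_nat_add of_nat_less_iff of_nat_mult)
  have rMr: "real M = 2^n" unfolding M_def by simp
  have "real D \<le> real L / real M + 1" "real L / real M - 1 < real D" using b1' M0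
    by (simp_all add: field_simps)
  moreover have "real L / real M \<le> a / real M + 1 / real M" "a / real M \<le> real L / real M"
    using l1 M0 by (simp_all add: divide_right_mono add_divide_distrib[symmetric])
  moreover have "1 / real M \<le> 1" using M0 by simp
  moreover have "real (Ccount n 0 k a) + real (Ccount n 1 k a) = real D"
    using eq unfolding D_def[symmetric] by (metis of_nat_add)
  ultimately show ?thesis unfolding rMr[symmetric] by (simp only: abs_le_iff) linarith
qed


definition G :: "nat \<Rightarrow> nat \<Rightarrow> int \<Rightarrow> nat \<Rightarrow> real" where
  "G n c k x = real (Ccount n c k ((2/3)^n * real x)) / ((2/3)^n * real x)"

lemma Ccount_le: assumes "a \<ge> 0" shows "real (Ccount n c k a) \<le> a + 1"
proof -
  have "Ccount n c k a \<le> nat \<lceil>a\<rceil>" unfolding Ccount_cnt by (rule cnt_le)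
  then show ?thesis using ceil_bounds[OF assms] by linarith
qed

lemma G_bound: "\<bar>G n c k x\<bar> \<le> 1 + (3/2)^n"
proof (cases "x = 0")
  case True then show ?thesis by (simp add: G_def)
next
  case False
  define a :: real where "a = (2/3)^n * real x"
  have a1: "a \<ge> (2/3)^n" unfolding a_def using False by simp
  have a0: "a > 0" using a1 by (smt (verit) zero_less_power zero_less_divide_iff)
  have "G n c k x = real (Ccount n c k a) / a" unfolding G_def a_def by simp
  also have "\<dots> \<le> (a + 1) / a" using Ccount_le[of a n c k] a0 by (simp add: divide_right_mono)
  also have "\<dots> = 1 + 1 / a" using a0 by (simp add: field_simps)
  also have "1 / a \<le> 1 / (2/3)^n" using a1 by (simp add: frac_le)
  also have "1 / ((2::real)/3)^n = (3/2)^n" by (simp add: power_divide)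
  finally have "G n c k x \<le> 1 + (3/2)^n" by simp
  moreover have "G n c k x \<ge> 0" unfolding G_def by simp
  ultimately show ?thesis by simp
qed

lemma diag:
  assumes inf: "infinite \<Lambda>"
  shows "\<exists>N. strict_mono N \<and> (\<forall>t. N t \<in> \<Lambda>) \<and> (\<forall>n c k. convergent (\<lambda>t. G n c k (N t)))"
proof -
  define N0 where "N0 = enumerate \<Lambda>"
  have N0m: "strict_mono N0" unfolding N0_def strict_mono_def using enumerate_mono inf by blast
  define Gt :: "nat \<times> nat \<times> int \<Rightarrow> nat \<Rightarrow> real" where "Gt p x = (case p of (n,c,k) \<Rightarrow> G n c k x)" for p x
  have Gtb: "bounded (range (\<lambda>t. Gt p (f t)))" for p f
  proof -
    obtain n c k where p: "p = (n,c,k)" by (cases p) auto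
    show ?thesis unfolding bounded_iff p Gt_def by (auto intro!: exI[of _ "1 + (3/2)^n"] G_bound)
  qed
  define P where "P m s = convergent (\<lambda>t. Gt (from_nat m) (N0 (s t)))" for m and s :: "nat \<Rightarrow> nat"
  have Peq: "P m s \<longleftrightarrow> convergent (\<lambda>t. Gt (from_nat m) (N0 (s t)))" for m s unfolding P_def ..
  interpret subseqs P
  proof
    fix m and s :: "nat \<Rightarrow> nat"
    assume "strict_mono s"
    obtain l r where r: "strict_mono r" "((\<lambda>t. Gt (from_nat m) (N0 (s t))) \<circ> r) \<longlonglongrightarrow> l"
      using bounded_imp_convergent_subsequence[OF Gtb[of "from_nat m" "\<lambda>t. N0 (s t)"]] by blast
    have "P m (s \<circ> r)" unfolding Peq convergent_def using r(2) by (auto simp: o_def)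
    then show "\<exists>r'. strict_mono r' \<and> P m (s \<circ> r')" using r(1) by blast
  qed
  have "P m (diagseq \<circ> (+) (Suc m))" for m
    by (rule diagseq_holds) (auto simp only: Peq o_def intro: convergent_subseq_convergent[unfolded o_def])
  then have "convergent (\<lambda>t. Gt (from_nat m) (N0 ((diagseq \<circ> (+) (Suc m)) t)))" for m
    by (rule Peq[THEN iffD1])
  then have c1: "convergent (\<lambda>t. Gt (from_nat m) (N0 (diagseq (Suc (m + t)))))" for m
    by (simp add: o_def)
  have cv: "convergent (\<lambda>t. Gt (from_nat m) (N0 (diagseq t)))" for m
  proof -
    have e: "(\<lambda>t. Gt (from_nat m) (N0 (diagseq (Suc (m + t))))) = (\<lambda>n. Gt (from_nat m) (N0 (diagseq (n + Suc m))))"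
      by (simp add: add.commute)
    show ?thesis using c1[of m] unfolding e
      using convergent_ignore_initial_segment[of "\<lambda>t. Gt (from_nat m) (N0 (diagseq t))" "Suc m"] by simp
  qed
  define N where "N = N0 \<circ> diagseq"
  have "strict_mono N" unfolding N_def using N0m subseq_diagseq by (rule strict_mono_o)
  moreover have "\<forall>t. N t \<in> \<Lambda>" unfolding N_def N0_def using enumerate_in_set[OF inf] by simp
  moreover have "convergent (\<lambda>t. G n c k (N t))" for n c k
    using cv[of "to_nat (n,c,k)"] unfolding N_def Gt_def by simp
  ultimately show ?thesis by blast
qed

lemma vanish:
  assumes N: "strict_mono N" and F: "\<And>t. t \<ge> 1 \<Longrightarrow> \<bar>F t\<bar> \<le> K / ((2/3)^n * real (N t))"
  shows "F \<longlonglongrightarrow> 0"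
proof (rule Lim_null_comparison)
  show "(\<lambda>t. \<bar>K\<bar> * (3/2)^n / real t) \<longlonglongrightarrow> 0" by (rule lim_const_over_n)
  show "\<forall>\<^sub>F t in sequentially. norm (F t) \<le> \<bar>K\<bar> * (3/2)^n / real t"
    unfolding eventually_sequentially
  proof (intro exI allI impI)
    fix t :: nat assume t: "t \<ge> 1"
    have Nt: "real t \<le> real (N t)" using seq_suble[OF N] by simp
    have p: "((2::real)/3)^n > 0" by simp
    have "\<bar>F t\<bar> \<le> K / ((2/3)^n * real (N t))" using F t .
    also have "\<dots> \<le> \<bar>K\<bar> / ((2/3)^n * real (N t))" by (simp add: divide_right_mono)
    also have "\<dots> \<le> \<bar>K\<bar> / ((2/3)^n * real t)"
      using t Nt p by (intro divide_left_mono mult_left_mono) auto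
    also have "\<dots> = \<bar>K\<bar> * (3/2)^n / real t" by (simp add: power_divide field_simps)
    finally show "norm (F t) \<le> \<bar>K\<bar> * (3/2)^n / real t" by simp
  qed
qed


theorem lemma19:
  fixes \<Lambda> :: "nat set"
  assumes "infinite \<Lambda>"
  shows "\<exists>N :: nat \<Rightarrow> nat. strict_mono N \<and> (\<forall>t. N t \<in> \<Lambda>) \<and>
    (\<exists>\<mu> :: nat \<Rightarrow> nat \<Rightarrow> int \<Rightarrow> real.
      (\<forall>n c k. c \<le> 1 \<longrightarrow>
         (\<lambda>t. real (Ccount n c k ((2/3)^n * real (N t))) / ((2/3)^n * real (N t)))
           \<longlonglongrightarrow> \<mu> n c k) \<and>
      (\<forall>n c k. c \<le> 1 \<longrightarrow> \<mu> n c (k + 2^n) = \<mu> n c k) \<and>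
      (\<forall>n c k q. c \<le> 1 \<longrightarrow> [3 * q = 1] (mod 2^(n+1)) \<longrightarrow>
         3/2 * \<mu> n c k = \<mu> (n+1) c (2*q*k) + \<mu> (n+1) (1 - c) (2*q*k - q)
                          + \<mu> (n+1) c (2*q*k - 2*q)) \<and>
      (\<forall>n k. \<mu> n 0 k + \<mu> n 1 k = 1 / 2^n))"
proof -
  obtain N where N: "strict_mono N" "\<forall>t. N t \<in> \<Lambda>" "\<And>n c k. convergent (\<lambda>t. G n c k (N t))"
    using diag[OF assms] by blast
  define \<mu> where "\<mu> n c k = lim (\<lambda>t. G n c k (N t))" for n c k
  have lim: "(\<lambda>t. G n c k (N t)) \<longlonglongrightarrow> \<mu> n c k" for n c k
    unfolding \<mu>_def using N(3) convergent_LIMSEQ_iff by blast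
  have Npos: "real (N t) \<ge> 1" if "t \<ge> 1" for t using seq_suble[OF N(1), of t] that by simp
  have p1: "\<forall>n c k. c \<le> 1 \<longrightarrow>
         (\<lambda>t. real (Ccount n c k ((2/3)^n * real (N t))) / ((2/3)^n * real (N t))) \<longlonglongrightarrow> \<mu> n c k"
    using lim unfolding G_def by blast
  have p2: "\<forall>n c k. c \<le> 1 \<longrightarrow> \<mu> n c (k + 2^n) = \<mu> n c k"
  proof (intro allI impI)
    fix n c :: nat and k :: int
    have "G n c (k + 2^n) x = G n c k x" for x
      unfolding G_def Ccount_def by (simp add: cong_def)
    then show "\<mu> n c (k + 2^n) = \<mu> n c k" unfolding \<mu>_def by simp
  qed
  have p3: "\<forall>n c k q. c \<le> 1 \<longrightarrow> [3 * q = 1] (mod 2^(n+1)) \<longrightarrow>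
         3/2 * \<mu> n c k = \<mu> (n+1) c (2*q*k) + \<mu> (n+1) (1 - c) (2*q*k - q)
                          + \<mu> (n+1) c (2*q*k - 2*q)"
  proof (intro allI impI)
    fix n c :: nat and k q :: int assume c: "c \<le> 1" and h: "[3 * q = 1] (mod 2^(n+1))"
    define F where "F t = G n c k (N t) - 2/3 * (G (n+1) c (2*q*k) (N t) + G (n+1) (1-c) (2*q*k-q) (N t)
       + G (n+1) c (2*q*k-2*q) (N t))" for t
    have "F \<longlonglongrightarrow> 0"
    proof (rule vanish[OF N(1), of _ 11 n])
      fix t :: nat assume t: "t \<ge> 1"
      define a where "a = (2/3)^n * real (N t)"
      have a0: "a > 0" unfolding a_def using Npos[OF t] by simp
      have b: "(2/3)^(n+1) * real (N t) = 2*a/3" unfolding a_def by simp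
      define C where "C = real (Ccount n c k a)"
      define C1 where "C1 = real (Ccount (n+1) c (2*q*k) (2*a/3))"
      define C2 where "C2 = real (Ccount (n+1) (1-c) (2*q*k-q) (2*a/3))"
      define C3 where "C3 = real (Ccount (n+1) c (2*q*k-2*q) (2*a/3))"
      have "F t = C / a - 2/3 * (C1 / (2*a/3) + C2 / (2*a/3) + C3 / (2*a/3))"
        unfolding F_def G_def b C_def C1_def C2_def C3_def a_def[symmetric] by simp
      also have "\<dots> = (C - (C1 + C2 + C3)) / a" using a0 by (simp add: field_simps)
      finally have Ft: "\<bar>F t\<bar> = \<bar>C - (C1 + C2 + C3)\<bar> / a" using a0 by simp
      have "\<bar>C - (C1 + C2 + C3)\<bar> \<le> 11" unfolding C_def C1_def C2_def C3_def
        using err_rec[OF _ c h, of a k] a0 by simp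
      then show "\<bar>F t\<bar> \<le> 11 / ((2/3)^n * real (N t))" unfolding Ft a_def[symmetric]
        using a0 by (simp add: divide_right_mono)
    qed
    moreover have "F \<longlonglongrightarrow> \<mu> n c k - 2/3 * (\<mu> (n+1) c (2*q*k) + \<mu> (n+1) (1-c) (2*q*k-q)
       + \<mu> (n+1) c (2*q*k-2*q))"
      unfolding F_def by (intro tendsto_intros lim)
    ultimately have "\<mu> n c k - 2/3 * (\<mu> (n+1) c (2*q*k) + \<mu> (n+1) (1-c) (2*q*k-q)
       + \<mu> (n+1) c (2*q*k-2*q)) = 0" using LIMSEQ_unique by metis
    then show "3/2 * \<mu> n c k = \<mu> (n+1) c (2*q*k) + \<mu> (n+1) (1 - c) (2*q*k - q)
                          + \<mu> (n+1) c (2*q*k - 2*q)" by simp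
  qed
  have p4: "\<forall>n k. \<mu> n 0 k + \<mu> n 1 k = 1 / 2^n"
  proof (intro allI)
    fix n :: nat and k :: int
    define F where "F t = G n 0 k (N t) + G n 1 k (N t) - 1 / 2^n" for t
    have "F \<longlonglongrightarrow> 0"
    proof (rule vanish[OF N(1), of _ 2 n])
      fix t :: nat assume t: "t \<ge> 1"
      define a where "a = (2/3)^n * real (N t)"
      have a0: "a > 0" unfolding a_def using Npos[OF t] by simp
      define C0 where "C0 = real (Ccount n 0 k a)"
      define C1 where "C1 = real (Ccount n 1 k a)"
      have "F t = C0 / a + C1 / a - 1 / 2^n"
        unfolding F_def G_def C0_def C1_def a_def[symmetric] by simp
      also have "\<dots> = (C0 + C1 - a / 2^n) / a" using a0 by (simp add: field_simps)
      finally have Ft: "\<bar>F t\<bar> = \<bar>C0 + C1 - a / 2^n\<bar> / a" using a0 by simp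
      have "\<bar>C0 + C1 - a / 2^n\<bar> \<le> 2" unfolding C0_def C1_def
        using sum01[of a n k] a0 by simp
      then show "\<bar>F t\<bar> \<le> 2 / ((2/3)^n * real (N t))" unfolding Ft a_def[symmetric]
        using a0 by (simp add: divide_right_mono)
    qed
    moreover have "F \<longlonglongrightarrow> \<mu> n 0 k + \<mu> n 1 k - 1 / 2^n"
      unfolding F_def by (intro tendsto_intros lim)
    ultimately have "\<mu> n 0 k + \<mu> n 1 k - 1 / 2^n = 0" using LIMSEQ_unique by metis
    then show "\<mu> n 0 k + \<mu> n 1 k = 1 / 2^n" by simp
  qed
  show ?thesis using N(1,2) p1 p2 p3 p4 by blast
qed

end
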